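(* Let $M$ be $\mathbb{E}^2$, $\mathbb{S}^2$ or $\mathbb{H}^2$ with constant curvature $k$ (so $k=0$, $k>0$, $k<0$ respectively). Let $K\subset M$ be a compact region with $C^2$ boundary $\partial K$, and let $\kappa_g$ be the geodesic curvature of $\partial K$. Fix a point $O\in M$ and let $(\rho,\theta)$ be geodesic polar coordinates about $O$. Then the perimeter (length of $\partial K$) is $$\mathcal{P}=\int_{\partial K}\ell(\rho)^2\,\kappa_g\,d\theta+k\int_{\partial K}a(\rho)\,ds .$$
   Context: $\ell(\rho)=L(\rho)/2\pi$ and $a(\rho)=A(\rho)/2\pi$, where $L(\rho)$ and $A(\rho)$ are the circumference and area of a disk of radius $\rho$ in $M$: for $k>0$, $\ell(\rho)=\sin(\sqrt{k}\rho)/\sqrt{k}$, $a(\rho)=(1-\cos(\sqrt{k}\rho))/k$; for $k=0$, $\ell(\rho)=\rho$, $a(\rho)=\rho^2/2$; for $k<0$, $\ell(\rho)=\sinh(\sqrt{-k}\rho)/\sqrt{-k}$, $a(\rho)=(1-\cosh(\sqrt{-k}\rho))/k$. $\partial K$ is oriented positively (counterclockwise, $K$ on the left) and parametrized by arclength $s$, with unit tangent $T$ and outward unit normal $N$; $\kappa_g$ is defined by $\nabla_T T=-\kappa_g N$ (so $\kappa_g\ge 0$ on convex boundaries). The 1-form $\ell(\rho)^2\,d\theta$ extends smoothly across $O$ (and, on $\mathbb{S}^2$, across the point antipodal to $O$), and the first integral is that of this smooth 1-form times $\kappa_g$ along $\partial K$. *)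

theory Defs
  imports "HOL-Analysis.Analysis"
begin

text \<open>Models of the simply connected space form M of constant curvature k, embedded in R^3:
  k > 0: the sphere of radius 1/sqrt k (Euclidean ambient form);
  k < 0: the upper sheet of the hyperboloid x1^2+x2^2-x3^2 = 1/k (Minkowski ambient form);
  k = 0: the plane x3 = 0.  The Riemannian metric of M is the restriction of the ambient
  bilinear form bil k to tangent vectors.\<close>

definition sgnb :: "real \<Rightarrow> real" where
  "sgnb k = (if k < 0 then -1 else 1)"

definition bil :: "real \<Rightarrow> real^3 \<Rightarrow> real^3 \<Rightarrow> real" where
  "bil k u v = u$1 * v$1 + u$2 * v$2 + sgnb k * (u$3 * v$3)"

definition model :: "real \<Rightarrow> (real^3) set" where
  "model k = (if k > 0 then {p. bil k p p = 1 / k}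
              else if k < 0 then {p. bil k p p = 1 / k \<and> p$3 > 0}
              else {p. p$3 = 0})"

definition unit_normal :: "real \<Rightarrow> real^3 \<Rightarrow> real^3" where
  "unit_normal k p = (if k = 0 then axis 3 1 else sqrt \<bar>k\<bar> *\<^sub>R p)"

text \<open>Cross product adapted to bil k: bil k (lcross k a b) x = det(a,b,x).\<close>
definition lcross :: "real \<Rightarrow> real^3 \<Rightarrow> real^3 \<Rightarrow> real^3" where
  "lcross k a b = (\<chi> i. (if i = 3 then sgnb k else 1) * (cross3 a b) $ i)"

text \<open>Rotation by +90 degrees in the oriented tangent plane T_p M.\<close>
definition rot90 :: "real \<Rightarrow> real^3 \<Rightarrow> real^3 \<Rightarrow> real^3" where
  "rot90 k p v = lcross k (unit_normal k p) v"

definition tproj :: "real \<Rightarrow> real^3 \<Rightarrow> real^3 \<Rightarrow> real^3" where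
  "tproj k Oc w = w - (bil k (unit_normal k Oc) w / bil k (unit_normal k Oc) (unit_normal k Oc))
                       *\<^sub>R unit_normal k Oc"

definition geod_dist :: "real \<Rightarrow> real^3 \<Rightarrow> real^3 \<Rightarrow> real" where
  "geod_dist k Oc p = (if k > 0 then arccos (k * bil k Oc p) / sqrt k
                      else if k < 0 then arcosh (k * bil k Oc p) / sqrt (- k)
                      else norm (p - Oc))"

definition expM :: "real \<Rightarrow> real^3 \<Rightarrow> real^3 \<Rightarrow> real \<Rightarrow> real^3" where
  "expM k p v t = (if k > 0 then cos (sqrt k * t) *\<^sub>R p + (sin (sqrt k * t) / sqrt k) *\<^sub>R v
                   else if k < 0 then cosh (sqrt (- k) * t) *\<^sub>R p + (sinh (sqrt (- k) * t) / sqrt (- k)) *\<^sub>R v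
                   else p + t *\<^sub>R v)"

text \<open>ell(rho) = L(rho)/2pi and a(rho) = A(rho)/2pi.\<close>
definition ell :: "real \<Rightarrow> real \<Rightarrow> real" where
  "ell k \<rho> = (if k > 0 then sin (sqrt k * \<rho>) / sqrt k
              else if k < 0 then sinh (sqrt (- k) * \<rho>) / sqrt (- k) else \<rho>)"

definition area_fn :: "real \<Rightarrow> real \<Rightarrow> real" where
  "area_fn k \<rho> = (if k > 0 then (1 - cos (sqrt k * \<rho>)) / k
                  else if k < 0 then (1 - cosh (sqrt (- k) * \<rho>)) / k else \<rho>^2 / 2)"

definition tangent :: "(real \<Rightarrow> real^3) \<Rightarrow> real \<Rightarrow> real^3" where
  "tangent \<gamma> s = vector_derivative \<gamma> (at s)"

definition C2_curve :: "(real \<Rightarrow> real^3) \<Rightarrow> bool" where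
  "C2_curve \<gamma> \<longleftrightarrow> (\<forall>s. \<gamma> differentiable at s) \<and> (\<forall>s. tangent \<gamma> differentiable at s)
      \<and> continuous_on UNIV (\<lambda>s. vector_derivative (tangent \<gamma>) (at s))"

text \<open>Positive orientation: K lies on the left, i.e. the geodesic issuing from gamma s in the
  direction rot90 T enters the interior of K (relative to M).\<close>
definition positively_oriented :: "real \<Rightarrow> (real^3) set \<Rightarrow> (real \<Rightarrow> real^3) \<Rightarrow> bool" where
  "positively_oriented k K \<gamma> \<longleftrightarrow> (\<forall>s. \<exists>\<epsilon>>0. \<forall>t. 0 < t \<and> t < \<epsilon> \<longrightarrow>
      expM k (\<gamma> s) (rot90 k (\<gamma> s) (tangent \<gamma> s)) t \<in> (top_of_set (model k)) interior_of K)"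

text \<open>Outward unit normal N (for a positively oriented boundary curve) and geodesic curvature
  defined by nabla_T T = - kappa_g N (nabla_T T is the tangential part of gamma'').\<close>
definition outward_normal :: "real \<Rightarrow> (real \<Rightarrow> real^3) \<Rightarrow> real \<Rightarrow> real^3" where
  "outward_normal k \<gamma> s = - rot90 k (\<gamma> s) (tangent \<gamma> s)"

definition geod_curv :: "real \<Rightarrow> (real \<Rightarrow> real^3) \<Rightarrow> real \<Rightarrow> real" where
  "geod_curv k \<gamma> s = - bil k (vector_derivative (tangent \<gamma>) (at s)) (outward_normal k \<gamma> s)"

text \<open>The 1-form ell(rho)^2 d theta evaluated along gamma at the parameter s, where theta is the
  polar angle about Oc, i.e. the angle of w = exp_O^{-1}(gamma s), which points along the projection
  of gamma s - Oc onto T_O M: d theta = <J w, w'> / |w|^2.  (Undefined only at the finitely many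
  parameters with gamma s = Oc or its antipode, where the smooth extension is irrelevant for the
  integral.)\<close>
definition polar_form :: "real \<Rightarrow> real^3 \<Rightarrow> (real \<Rightarrow> real^3) \<Rightarrow> real \<Rightarrow> real" where
  "polar_form k Oc \<gamma> s =
     (let w = (\<lambda>t. tproj k Oc (\<gamma> t - Oc))
      in ell k (geod_dist k Oc (\<gamma> s)) ^ 2 *
         (bil k (rot90 k Oc (w s)) (vector_derivative w (at s)) / bil k (w s) (w s)))"

end

theory Submission
  imports Defs
begin

lemma sgnb_cases: "sgnb k = 1 \<or> sgnb k = -1" by (simp add: sgnb_def)
lemma sgnb_sq: "sgnb k * sgnb k = 1" by (simp add: sgnb_def)

lemma bil_expand: "bil k u v = u$1 * v$1 + u$2 * v$2 + sgnb k * (u$3 * v$3)" by (simp add: bil_def)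

lemma bil_sym: "bil k u v = bil k v u" by (simp add: bil_def algebra_simps)
lemma bil_diff_left[simp]: "bil k (u - w) v = bil k u v - bil k w v" by (simp add: bil_def algebra_simps)
lemma bil_diff_right[simp]: "bil k v (u - w) = bil k v u - bil k v w" by (simp add: bil_def algebra_simps)
lemma bil_add_left[simp]: "bil k (u + w) v = bil k u v + bil k w v" by (simp add: bil_def algebra_simps)
lemma bil_add_right[simp]: "bil k v (u + w) = bil k v u + bil k v w" by (simp add: bil_def algebra_simps)
lemma bil_scale_left[simp]: "bil k (a *\<^sub>R u) v = a * bil k u v" by (simp add: bil_def algebra_simps)
lemma bil_scale_right[simp]: "bil k v (a *\<^sub>R u) = a * bil k v u" by (simp add: bil_def algebra_simps)
lemma bil_neg_left[simp]: "bil k (- u) v = - bil k u v" by (simp add: bil_def algebra_simps)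
lemma bil_neg_right[simp]: "bil k v (- u) = - bil k v u" by (simp add: bil_def algebra_simps)
lemma bil_zero[simp]: "bil k 0 v = 0" "bil k v 0 = 0" by (simp_all add: bil_def)

lemma lcross_nth: "lcross k a b $ 1 = a$2*b$3 - a$3*b$2" "lcross k a b $ 2 = a$3*b$1 - a$1*b$3"
   "lcross k a b $ 3 = sgnb k * (a$1*b$2 - a$2*b$1)"
  by (simp_all add: lcross_def cross3_def vector_def)

lemma gram:
  "bil k (lcross k a b) c * bil k (lcross k d e) f =
   sgnb k * (bil k a d * (bil k b e * bil k c f - bil k b f * bil k c e)
           - bil k a e * (bil k b d * bil k c f - bil k b f * bil k c d)
           + bil k a f * (bil k b d * bil k c e - bil k b e * bil k c d))"
  unfolding bil_expand lcross_nth using sgnb_sq[of k] by algebra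

lemma lcross_shift:
  "bil k (lcross k (r *\<^sub>R Q) (p - \<alpha> *\<^sub>R Q)) (t - \<beta> *\<^sub>R Q) = r * bil k (lcross k Q p) t"
  unfolding bil_expand lcross_nth vector_minus_component vector_scaleR_component real_scaleR_def
  using sgnb_sq[of k] by algebra

lemma lcross_scale: "bil k (lcross k (r *\<^sub>R p) t) u = r * bil k (lcross k p t) u"
  unfolding bil_expand lcross_nth by (simp add: algebra_simps)

lemma nth_deriv:
  "(f has_vector_derivative f') F \<Longrightarrow> ((\<lambda>x. f x $ i) has_real_derivative f' $ i) F"
  using bounded_linear.has_vector_derivative[OF bounded_linear_vec_nth]
  by (simp add: has_real_derivative_iff_has_vector_derivative)

lemma bil_deriv:
  assumes "(f has_vector_derivative f') (at x)" "(g has_vector_derivative g') (at x)"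
  shows "((\<lambda>x. bil k (f x) (g x)) has_real_derivative (bil k f' (g x) + bil k (f x) g')) (at x)"
proof -
  note d = nth_deriv[OF assms(1)] nth_deriv[OF assms(2)]
  have "((\<lambda>x. f x $ 1 * g x $ 1 + f x $ 2 * g x $ 2 + sgnb k * (f x $ 3 * g x $ 3)) has_real_derivative
     (f' $ 1 * g x $ 1 + f x $ 1 * g' $ 1) + (f' $ 2 * g x $ 2 + f x $ 2 * g' $ 2)
      + sgnb k * (f' $ 3 * g x $ 3 + f x $ 3 * g' $ 3)) (at x)"
    by (intro derivative_intros d DERIV_cmult DERIV_mult[THEN DERIV_cong]) (auto intro: d simp: algebra_simps)
  then show ?thesis unfolding bil_expand by (simp add: algebra_simps)
qed

lemma deriv_const_zero:
  assumes "(f has_real_derivative D) (at x)" "\<And>y. f y = c"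
  shows "D = 0"
proof -
  have "f = (\<lambda>_. c)" using assms(2) by auto
  then show ?thesis using assms(1) DERIV_const DERIV_unique by metis
qed

lemma lcross_shift2:
  "bil k (lcross k (r *\<^sub>R Q) (p - \<alpha> *\<^sub>R Q)) (t - \<beta> *\<^sub>R Q) = r * bil k (lcross k Q p) t"
  unfolding bil_expand lcross_nth vector_minus_component vector_scaleR_component real_scaleR_def
  using sgnb_sq[of k] by algebra

lemma cs_sphere:
  assumes "k > 0" "bil k Q Q = 1/k" "bil k p p = 1/k"
  shows "\<bar>k * bil k Q p\<bar> \<le> 1"
proof -
  have s: "sgnb k = 1" using assms by (simp add: sgnb_def)
  have "bil k Q Q * bil k p p - (bil k Q p)^2 =
     (Q$1*p$2-Q$2*p$1)^2+(Q$1*p$3-Q$3*p$1)^2+(Q$2*p$3-Q$3*p$2)^2"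
    unfolding bil_expand s by algebra
  also have "\<dots> \<ge> 0" by simp
  finally have "(bil k Q p)^2 \<le> 1/k^2" using assms by (simp add: power2_eq_square)
  then have "(k * bil k Q p)^2 \<le> 1" using assms by (simp add: power_mult_distrib field_simps)
  then show ?thesis by (simp add: abs_square_le_1)
qed

lemma cs_hyp:
  assumes "k < 0" "bil k Q Q = 1/k" "bil k p p = 1/k" "Q$3 > 0" "p$3 > 0"
  shows "k * bil k Q p \<ge> 1"
proof -
  have s: "sgnb k = -1" using assms by (simp add: sgnb_def)
  define c where "c = - 1/k"
  have c: "c > 0" using assms by (simp add: c_def)
  have Q3: "(Q$3)^2 = c + (Q$1)^2 + (Q$2)^2" using assms(2) unfolding bil_expand s c_def
    by (simp add: power2_eq_square)
  have p3: "(p$3)^2 = c + (p$1)^2 + (p$2)^2" using assms(3) unfolding bil_expand s c_def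
    by (simp add: power2_eq_square)
  have lag: "(c + (Q$1)^2 + (Q$2)^2) * (c + (p$1)^2 + (p$2)^2) - (c + Q$1*p$1 + Q$2*p$2)^2
     = c * ((Q$1 - p$1)^2 + (Q$2 - p$2)^2) + (Q$1*p$2 - Q$2*p$1)^2"
    by algebra
  have "(c + Q$1*p$1 + Q$2*p$2)^2 \<le> (Q$3 * p$3)^2"
    unfolding power_mult_distrib Q3 p3 using lag c by (smt (verit) mult_nonneg_nonneg zero_le_power2)
  moreover have "Q$3 * p$3 > 0" using assms by simp
  ultimately have "c + Q$1*p$1 + Q$2*p$2 \<le> Q$3 * p$3"
    by (smt (verit) power2_le_imp_le)
  then have "bil k Q p \<le> 1/k" unfolding bil_expand s c_def by simp
  from mult_left_mono_neg[OF this, of k] assms(1) show ?thesis by simp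
qed

lemma final_step:
  fixes E B X d \<kappa> :: real
  assumes "E = B" "X^2 = B - d^2"
  shows "E * (X / B) * \<kappa> = X * \<kappa>"
proof (cases "B = 0")
  case True
  then have "X^2 \<le> 0" using assms(2) by simp
  then have "X = 0" by simp
  then show ?thesis using True by simp
next
  case False
  then show ?thesis using assms(1) by simp
qed

lemma pointwise_nz:
  assumes Q: "Q \<in> model k" and P: "p \<in> model k" and k: "k \<noteq> 0"
    and tt: "bil k t t = 1" and tu: "bil k t u = 0"
    and pt: "bil k p t = 0" and pu: "bil k p u = -1"
  shows "ell k (geod_dist k Q p)^2 * (bil k (rot90 k Q (tproj k Q (p - Q))) (tproj k Q t)
          / bil k (tproj k Q (p - Q)) (tproj k Q (p - Q))) * (- bil k u (- rot90 k p t))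
       = - bil k (p - Q) u - k * area_fn k (geod_dist k Q p)"
proof -
  define r where "r = sqrt \<bar>k\<bar>"
  define s where "s = sgnb k"
  define b where "b = bil k Q p"
  define bt where "bt = bil k Q t"
  define bu where "bu = bil k Q u"
  have rr: "r * r = \<bar>k\<bar>" by (simp add: r_def)
  have r0: "r > 0" using k by (simp add: r_def)
  have ss: "s * s = 1" by (simp add: s_def sgnb_sq)
  have sk: "\<bar>k\<bar> = s * k" using k by (auto simp: s_def sgnb_def)
  have QQ: "bil k Q Q = 1/k" and pp: "bil k p p = 1/k" using Q P k
    by (auto simp: model_def split: if_splits)
  have un: "unit_normal k x = r *\<^sub>R x" for x using k by (simp add: unit_normal_def r_def)
  have s0: "s \<noteq> 0" using ss by auto
  have rsk: "r * r = s * k" using rr sk by simp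
  have c: "bil k (r *\<^sub>R Q) (r *\<^sub>R Q) = s"
  proof -
    have "bil k (r *\<^sub>R Q) (r *\<^sub>R Q) = (r * r) * bil k Q Q" by simp
    also have "\<dots> = s" unfolding rsk QQ using k by simp
    finally show ?thesis .
  qed
  have w: "tproj k Q (p - Q) = p - (k*b) *\<^sub>R Q"
  proof -
    have e: "bil k (r *\<^sub>R Q) (p - Q) / s * r = k*b - 1"
    proof -
      have "bil k (r *\<^sub>R Q) (p - Q) / s * r = (r * r) * (b - 1/k) / s"
        by (simp add: b_def QQ algebra_simps)
      also have "\<dots> = k*b - 1" unfolding rsk using s0 k by (simp add: field_simps)
      finally show ?thesis .
    qed
    have "tproj k Q (p - Q) = p - Q - (bil k (r *\<^sub>R Q) (p - Q) / s * r) *\<^sub>R Q"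
      unfolding tproj_def un c by simp
    also have "\<dots> = p - (k*b) *\<^sub>R Q" unfolding e by (simp add: algebra_simps)
    finally show ?thesis .
  qed
  have w': "tproj k Q t = t - (k*bt) *\<^sub>R Q"
  proof -
    have e: "bil k (r *\<^sub>R Q) t / s * r = k*bt"
    proof -
      have "bil k (r *\<^sub>R Q) t / s * r = (r * r) * bt / s"
        by (simp add: bt_def)
      also have "\<dots> = k*bt" unfolding rsk using s0 k by (simp add: field_simps)
      finally show ?thesis .
    qed
    have "tproj k Q t = t - (bil k (r *\<^sub>R Q) t / s * r) *\<^sub>R Q"
      unfolding tproj_def un c by simp
    also have "\<dots> = t - (k*bt) *\<^sub>R Q" unfolding e by (simp add: algebra_simps)
    finally show ?thesis .
  qed
  define B where "B = 1/k - k * b^2"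
  have B: "bil k (tproj k Q (p - Q)) (tproj k Q (p - Q)) = B"
    unfolding w B_def using QQ pp k by (simp add: bil_sym[of k p Q] b_def field_simps power2_eq_square)
  define X where "X = r * bil k (lcross k Q p) t"
  have X: "bil k (rot90 k Q (tproj k Q (p - Q))) (tproj k Q t) = X"
    unfolding rot90_def un w w' X_def by (rule lcross_shift2)
  have kap: "- bil k u (- rot90 k p t) = r * bil k (lcross k p t) u"
    unfolding rot90_def un by (simp add: bil_sym[of k u] lcross_scale)
  have Xk: "X * (r * bil k (lcross k p t) u) = k * b + bu"
  proof -
    have "X * (r * bil k (lcross k p t) u) = (r*r) * (bil k (lcross k Q p) t * bil k (lcross k p t) u)"
      by (simp add: X_def)
    also have "\<dots> = (r*r) * s * (b + bu / k)"
      unfolding gram using tt tu pt pu pp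
      by (simp add: bil_sym[of k t p] bil_sym[of k t Q] b_def bt_def bu_def s_def algebra_simps)
    also have "\<dots> = k * b + bu" unfolding rsk using ss k by (simp add: field_simps)
    finally show ?thesis .
  qed
  have X2: "X^2 = B - bt^2"
  proof -
    have "X^2 = (r*r) * (bil k (lcross k Q p) t * bil k (lcross k Q p) t)"
      by (simp add: X_def power2_eq_square)
    also have "\<dots> = (r*r) * s * (1/k * 1/k - b*b - bt * bt / k)"
      unfolding gram using tt tu pt pu pp QQ
      by (simp add: bil_sym[of k t p] bil_sym[of k t Q] bil_sym[of k p Q] b_def bt_def bu_def s_def algebra_simps)
    also have "\<dots> = B - bt^2" unfolding rsk using ss k by (simp add: B_def field_simps power2_eq_square)
    finally show ?thesis .
  qed
  have ell_area: "ell k (geod_dist k Q p)^2 = B \<and> area_fn k (geod_dist k Q p) = (1 - k*b)/k"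
  proof (cases "k > 0")
    case True
    have cs: "- 1 \<le> k*b" "k*b \<le> 1" using cs_sphere[OF True QQ pp] by (auto simp: b_def)
    have g: "sqrt k * geod_dist k Q p = arccos (k*b)" using True by (simp add: geod_dist_def b_def)
    have "ell k (geod_dist k Q p) = sin (arccos (k*b)) / sqrt k" using True by (simp add: ell_def g)
    also have "\<dots> = sqrt (1 - (k*b)^2) / sqrt k" using cs by (simp add: sin_arccos)
    finally have "ell k (geod_dist k Q p)^2 = (1 - (k*b)^2) / k"
      using True cs by (simp add: power_divide abs_square_le_1)
    also have "\<dots> = B" using True by (simp add: B_def field_simps power2_eq_square)
    finally have e: "ell k (geod_dist k Q p)^2 = B" .
    have "area_fn k (geod_dist k Q p) = (1 - cos (arccos (k*b))) / k" using True by (simp add: area_fn_def g)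
    then show ?thesis using e cs by simp
  next
    case False
    then have kn: "k < 0" using k by simp
    have P3: "p$3 > 0" and Q3: "Q$3 > 0" using P Q kn by (auto simp: model_def)
    have cs: "1 \<le> k*b" using cs_hyp[OF kn QQ pp Q3 P3] by (auto simp: b_def)
    have g: "sqrt (-k) * geod_dist k Q p = arcosh (k*b)" using kn by (simp add: geod_dist_def b_def)
    have "ell k (geod_dist k Q p) = sinh (arcosh (k*b)) / sqrt (-k)" using kn by (simp add: ell_def g)
    also have "\<dots> = sqrt ((k*b)^2 - 1) / sqrt (-k)" using cs by (simp add: sinh_arcosh_real)
    finally have "ell k (geod_dist k Q p)^2 = ((k*b)^2 - 1) / (-k)"
      using kn cs by (simp add: power_divide one_le_power)
    also have "\<dots> = B" using kn by (simp add: B_def field_simps power2_eq_square)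
    finally have e: "ell k (geod_dist k Q p)^2 = B" .
    have "area_fn k (geod_dist k Q p) = (1 - cosh (arcosh (k*b))) / k" using kn by (simp add: area_fn_def g)
    then show ?thesis using e cs by simp
  qed
  have "ell k (geod_dist k Q p)^2 * (bil k (rot90 k Q (tproj k Q (p - Q))) (tproj k Q t)
          / bil k (tproj k Q (p - Q)) (tproj k Q (p - Q))) * (- bil k u (- rot90 k p t))
        = X * (r * bil k (lcross k p t) u)"
    unfolding B X kap by (rule final_step[OF conjunct1[OF ell_area] X2])
  also have "\<dots> = - bil k (p - Q) u - k * area_fn k (geod_dist k Q p)"
    unfolding Xk using ell_area pu k by (simp add: bu_def bil_sym[of k u] field_simps)
  finally show ?thesis .
qed

lemma pointwise_z:
  assumes Q: "Q \<in> model 0" and P: "p \<in> model 0"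
    and tt: "bil 0 t t = 1" and tu: "bil 0 t u = 0"
    and t3: "t$3 = 0" and u3: "u$3 = 0"
  shows "ell 0 (geod_dist 0 Q p)^2 * (bil 0 (rot90 0 Q (tproj 0 Q (p - Q))) (tproj 0 Q t)
          / bil 0 (tproj 0 Q (p - Q)) (tproj 0 Q (p - Q))) * (- bil 0 u (- rot90 0 p t))
       = - bil 0 (p - Q) u - 0 * area_fn 0 (geod_dist 0 Q p)"
proof -
  define e :: "real^3" where "e = axis 3 1"
  have be: "bil 0 e x = x$3" "bil 0 x e = x$3" for x by (simp_all add: e_def bil_def axis_def sgnb_def)
  have s: "sgnb 0 = 1" by (simp add: sgnb_def)
  have e3: "e$3 = 1" by (simp add: e_def)
  have Q3: "Q$3 = 0" and P3: "p$3 = 0" using Q P by (auto simp: model_def)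
  have un: "unit_normal 0 x = e" for x by (simp add: unit_normal_def e_def)
  have w: "tproj 0 Q (p - Q) = p - Q" unfolding tproj_def un using Q3 P3 by (simp add: be)
  have w': "tproj 0 Q t = t" unfolding tproj_def un using t3 by (simp add: be)
  define B where "B = bil 0 (p - Q) (p - Q)"
  have ell: "ell 0 (geod_dist 0 Q p)^2 = B"
    by (simp add: ell_def geod_dist_def B_def power2_norm_eq_inner inner_vec_def sum_3 bil_def s)
  define X where "X = bil 0 (lcross 0 e (p - Q)) t"
  have kap: "- bil 0 u (- rot90 0 p t) = bil 0 (lcross 0 e t) u"
    unfolding rot90_def un by (simp add: bil_sym[of 0 u])
  have Xk: "X * bil 0 (lcross 0 e t) u = - bil 0 (p - Q) u"
    unfolding X_def gram s using tt tu t3 u3 Q3 P3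
    by (simp add: be bil_sym[of 0 t "p - Q"] e3)
  have X2: "X^2 = B - (bil 0 (p - Q) t)^2"
    unfolding power2_eq_square X_def gram s using tt tu t3 u3 Q3 P3
    by (simp add: be bil_sym[of 0 t p] bil_sym[of 0 t Q] B_def e3)
  show ?thesis unfolding w w' rot90_def un kap[unfolded rot90_def un]
    using final_step[OF ell X2, of "bil 0 (lcross 0 e t) u"] Xk unfolding X_def B_def by simp
qed

lemma area_nz:
  assumes Q: "Q \<in> model k" and P: "p \<in> model k" and k: "k \<noteq> 0"
  shows "area_fn k (geod_dist k Q p) = (1 - k * bil k Q p) / k"
proof -
  define b where "b = bil k Q p"
  have QQ: "bil k Q Q = 1/k" and pp: "bil k p p = 1/k" using Q P k
    by (auto simp: model_def split: if_splits)
  show ?thesis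
  proof (cases "k > 0")
    case True
    have cs: "- 1 \<le> k*b" "k*b \<le> 1" using cs_sphere[OF True QQ pp] by (auto simp: b_def)
    have g: "sqrt k * geod_dist k Q p = arccos (k*b)" using True by (simp add: geod_dist_def b_def)
    have "area_fn k (geod_dist k Q p) = (1 - cos (arccos (k*b))) / k" using True by (simp add: area_fn_def g)
    then show ?thesis using cs by (simp add: b_def)
  next
    case False
    then have kn: "k < 0" using k by simp
    have P3: "p$3 > 0" and Q3: "Q$3 > 0" using P Q kn by (auto simp: model_def)
    have cs: "1 \<le> k*b" using cs_hyp[OF kn QQ pp Q3 P3] by (auto simp: b_def)
    have g: "sqrt (-k) * geod_dist k Q p = arcosh (k*b)" using kn by (simp add: geod_dist_def b_def)
    have "area_fn k (geod_dist k Q p) = (1 - cosh (arcosh (k*b))) / k" using kn by (simp add: area_fn_def g)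
    then show ?thesis using cs by (simp add: b_def)
  qed
qed

lemma tproj_linear: "bounded_linear (tproj k Q)"
proof -
  have "linear (tproj k Q)"
    by (rule linearI) (simp_all add: tproj_def algebra_simps add_divide_distrib scaleR_add_left)
  then show ?thesis by (simp add: linear_conv_bounded_linear)
qed

lemma curve:
  assumes Q: "Q \<in> model k" and L: "L > 0" and C2: "C2_curve \<gamma>" and M: "\<forall>s. \<gamma> s \<in> model k"
    and per: "\<forall>s. \<gamma> (s + L) = \<gamma> s" and unit: "\<forall>s. bil k (tangent \<gamma> s) (tangent \<gamma> s) = 1"
  shows "integral {0..L} (\<lambda>s. polar_form k Q \<gamma> s * geod_curv k \<gamma> s)
        + k * integral {0..L} (\<lambda>s. area_fn k (geod_dist k Q (\<gamma> s))) = L"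
proof -
  define T where "T = tangent \<gamma>"
  define U where "U s = vector_derivative T (at s)" for s
  have dg: "(\<gamma> has_vector_derivative T s) (at s)" for s
    using C2 unfolding C2_curve_def T_def tangent_def by (simp add: vector_derivative_works)
  have dT: "(T has_vector_derivative U s) (at s)" for s
    using C2 unfolding C2_curve_def T_def U_def by (simp add: vector_derivative_works)
  have contU: "continuous_on UNIV U" using C2 unfolding C2_curve_def T_def U_def by simp
  have tt: "bil k (T s) (T s) = 1" for s using unit by (simp add: T_def)
  have tu: "bil k (T s) (U s) = 0" for s
  proof -
    have "bil k (U s) (T s) + bil k (T s) (U s) = 0"
      by (rule deriv_const_zero[OF bil_deriv[OF dT dT]]) (simp add: tt)
    then show ?thesis by (simp add: bil_sym[of k "U s"])
  qed
  have nzfacts: "bil k (\<gamma> s) (T s) = 0 \<and> bil k (\<gamma> s) (U s) = -1" if k: "k \<noteq> 0" for s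
  proof -
    have pp: "bil k (\<gamma> x) (\<gamma> x) = 1/k" for x using M k by (auto simp: model_def split: if_splits)
    have pt: "bil k (\<gamma> x) (T x) = 0" for x
    proof -
      have "bil k (T x) (\<gamma> x) + bil k (\<gamma> x) (T x) = 0"
        by (rule deriv_const_zero[OF bil_deriv[OF dg dg]]) (simp add: pp)
      then show ?thesis by (simp add: bil_sym[of k "T x"])
    qed
    have "bil k (T s) (T s) + bil k (\<gamma> s) (U s) = 0"
      by (rule deriv_const_zero[OF bil_deriv[OF dg dT]]) (simp add: pt)
    then show ?thesis using pt tt by simp
  qed
  have zfacts: "T s $ 3 = 0 \<and> U s $ 3 = 0" if k: "k = 0" for s
  proof -
    have g3: "\<gamma> x $ 3 = 0" for x using M k by (auto simp: model_def)
    have t3: "T x $ 3 = 0" for x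
      by (rule deriv_const_zero[OF nth_deriv[OF dg]]) (simp add: g3)
    have "U s $ 3 = 0"
      by (rule deriv_const_zero[OF nth_deriv[OF dT]]) (simp add: t3)
    then show ?thesis using t3 by simp
  qed
  define A where "A s = area_fn k (geod_dist k Q (\<gamma> s))" for s
  define g where "g s = - bil k (\<gamma> s - Q) (U s)" for s
  have dw: "vector_derivative (\<lambda>t. tproj k Q (\<gamma> t - Q)) (at s) = tproj k Q (T s)" for s
  proof -
    have "((\<lambda>t. \<gamma> t - Q) has_vector_derivative T s) (at s)"
      using has_vector_derivative_diff[OF dg has_vector_derivative_const[of Q]] by simp
    from bounded_linear.has_vector_derivative[OF tproj_linear this]
    show ?thesis by (rule vector_derivative_at)
  qed
  have pw: "polar_form k Q \<gamma> s * geod_curv k \<gamma> s = g s - k * A s" for s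
  proof -
    have "polar_form k Q \<gamma> s * geod_curv k \<gamma> s =
       ell k (geod_dist k Q (\<gamma> s))^2 * (bil k (rot90 k Q (tproj k Q (\<gamma> s - Q))) (tproj k Q (T s))
          / bil k (tproj k Q (\<gamma> s - Q)) (tproj k Q (\<gamma> s - Q))) * (- bil k (U s) (- rot90 k (\<gamma> s) (T s)))"
      unfolding polar_form_def Let_def dw geod_curv_def outward_normal_def T_def U_def by simp
    also have "\<dots> = g s - k * A s"
    proof (cases "k = 0")
      case True
      show ?thesis using pointwise_z[of Q "\<gamma> s" "T s" "U s"] Q M tt tu zfacts True
        by (simp add: g_def A_def)
    next
      case False
      show ?thesis using pointwise_nz[of Q k "\<gamma> s" "T s" "U s"] Q M tt tu nzfacts False
        by (simp add: g_def A_def)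
    qed
    finally show ?thesis .
  qed
  define h where "h s = bil k (\<gamma> s - Q) (T s)" for s
  have dh: "(h has_vector_derivative (1 - g s)) (at s within {0..L})" for s
  proof -
    have "((\<lambda>t. \<gamma> t - Q) has_vector_derivative T s) (at s)"
      using has_vector_derivative_diff[OF dg has_vector_derivative_const[of Q]] by simp
    note d = this
    have e: "1 - g s = bil k (T s) (T s) + bil k (\<gamma> s - Q) (U s)" using tt by (simp add: g_def)
    have "(h has_real_derivative (1 - g s)) (at s)"
      unfolding h_def e by (rule bil_deriv[OF d dT])
    then show ?thesis
      by (simp add: has_real_derivative_iff_has_vector_derivative has_vector_derivative_at_within)
  qed
  have TL: "T L = T 0"
  proof -
    have "((\<gamma> \<circ> (\<lambda>x. x + L)) has_vector_derivative (1 *\<^sub>R T L)) (at 0)"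
      by (rule vector_diff_chain_at) (auto intro!: derivative_eq_intros dg)
    moreover have "\<gamma> \<circ> (\<lambda>x. x + L) = \<gamma>" using per by (auto simp: o_def)
    ultimately have "(\<gamma> has_vector_derivative T L) (at 0)" by simp
    then show ?thesis using dg[of 0] vector_derivative_at by metis
  qed
  have hL: "h L = h 0" using per[rule_format, of 0] TL by (simp add: h_def)
  have i1: "((\<lambda>s. 1 - g s) has_integral 0) {0..L}"
    using fundamental_theorem_of_calculus[of 0 L h "\<lambda>s. 1 - g s"] dh L hL by simp
  have i0: "((\<lambda>s. 1::real) has_integral L) {0..L}"
    using has_integral_const_real[of "1::real" 0 L] L by simp
  have ig: "(g has_integral L) {0..L}"
    using has_integral_diff[OF i0 i1] by simp
  have iA: "(\<lambda>s. k * A s) integrable_on {0..L}"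
  proof (cases "k = 0")
    case True then show ?thesis using integrable_0 by simp
  next
    case False
    have Aeq: "k * A s = 1 - k * bil k Q (\<gamma> s)" for s
      using area_nz[OF Q M[rule_format, of s] False] False by (simp add: A_def)
    have "isCont (\<lambda>s. bil k Q (\<gamma> s)) s" for s
      using bil_deriv[OF has_vector_derivative_const[of Q] dg, of k] by (rule DERIV_isCont)
    then have "continuous_on {0..L} (\<lambda>s. 1 - k * bil k Q (\<gamma> s))"
      by (intro continuous_at_imp_continuous_on ballI) (auto intro!: continuous_intros)
    then show ?thesis unfolding Aeq by (rule integrable_continuous_interval)
  qed
  have "integral {0..L} (\<lambda>s. polar_form k Q \<gamma> s * geod_curv k \<gamma> s)
      = integral {0..L} (\<lambda>s. g s - k * A s)" by (simp add: pw)
  also have "\<dots> = L - integral {0..L} (\<lambda>s. k * A s)"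
    using integral_diff[OF has_integral_integrable[OF ig] iA] integral_unique[OF ig] by simp
  also have "integral {0..L} (\<lambda>s. k * A s) = k * integral {0..L} A"
    using integral_cmul[where c=k and f=A and S="{0..L}"] by simp
  moreover have "A = (\<lambda>s. area_fn k (geod_dist k Q (\<gamma> s)))" by (simp add: A_def fun_eq_iff)
  ultimately show ?thesis by simp
qed

theorem theorem2p1:
  fixes k :: real and K :: "(real^3) set" and Oc :: "real^3"
    and n :: nat and \<gamma> :: "nat \<Rightarrow> real \<Rightarrow> real^3" and L :: "nat \<Rightarrow> real"
  assumes "Oc \<in> model k"
    and "K \<subseteq> model k" and "compact K"
    and "(top_of_set (model k)) closure_of ((top_of_set (model k)) interior_of K) = K"
    and "\<forall>i<n. L i > 0 \<and> C2_curve (\<gamma> i) \<and> (\<forall>s. \<gamma> i s \<in> model k)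
               \<and> (\<forall>s. \<gamma> i (s + L i) = \<gamma> i s) \<and> inj_on (\<gamma> i) {0..<L i}
               \<and> (\<forall>s. bil k (tangent (\<gamma> i) s) (tangent (\<gamma> i) s) = 1)
               \<and> positively_oriented k K (\<gamma> i)"
    and "\<forall>i<n. \<forall>j<n. i \<noteq> j \<longrightarrow> \<gamma> i ` {0..L i} \<inter> \<gamma> j ` {0..L j} = {}"
    and "(top_of_set (model k)) frontier_of K = (\<Union>i<n. \<gamma> i ` {0..L i})"
  shows "(\<Sum>i<n. L i) =
           (\<Sum>i<n. integral {0..L i} (\<lambda>s. polar_form k Oc (\<gamma> i) s * geod_curv k (\<gamma> i) s))
         + k * (\<Sum>i<n. integral {0..L i} (\<lambda>s. area_fn k (geod_dist k Oc (\<gamma> i s))))"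
proof -
  have e: "integral {0..L i} (\<lambda>s. polar_form k Oc (\<gamma> i) s * geod_curv k (\<gamma> i) s)
        + k * integral {0..L i} (\<lambda>s. area_fn k (geod_dist k Oc (\<gamma> i s))) = L i" if "i < n" for i
    using assms(5) that by (intro curve[OF assms(1)]) auto
  have "(\<Sum>i<n. L i) = (\<Sum>i<n. integral {0..L i} (\<lambda>s. polar_form k Oc (\<gamma> i) s * geod_curv k (\<gamma> i) s)
        + k * integral {0..L i} (\<lambda>s. area_fn k (geod_dist k Oc (\<gamma> i s))))"
    using e by (intro sum.cong) auto
  also have "\<dots> = (\<Sum>i<n. integral {0..L i} (\<lambda>s. polar_form k Oc (\<gamma> i) s * geod_curv k (\<gamma> i) s))
         + k * (\<Sum>i<n. integral {0..L i} (\<lambda>s. area_fn k (geod_dist k Oc (\<gamma> i s))))"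
    by (simp add: sum.distrib sum_distrib_left)
  finally show ?thesis .
qed

end
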